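(* Consider a tabular finite MDP and a full-support policy $\pi$. Let $\pi'(a|s)=\pi(a|s)e^{\eta f_a(s)}/Z_s$ with $\eta>0$, where $f_a(s):=[U_a(s)]_+$ and $Z_s:=\sum_{a'}\pi(a'|s)e^{\eta f_{a'}(s)}$. Then \[ V(\pi')-V(\pi)=\frac{1}{1-\gamma}\sum_{s\in\mathcal S}d_\rho^{\pi'}(s)\,\frac1{Z_s}\sum_{i:\,U_i(s)>0}\pi(i|s)U_i(s)\big(e^{\eta U_i(s)}-1\big)\;\ge\;0. \]
   Context: A finite MDP $(\mathcal S,\mathcal A,P,r,\gamma,\rho)$ with $\gamma\in[0,1)$; $V^\pi,Q^\pi$ discounted value functions, $V(\pi)=\mathbb{E}_{s\sim\rho}V^\pi(s)$, $d_\rho^\pi(s)=(1-\gamma)\sum_{t\ge0}\gamma^t\Pr(s_t=s\mid\rho,\pi)$. $U_a(s):=Q^\pi(s,a)-V^\pi(s)$ (advantage under the current policy $\pi$), $[x]_+=\max(x,0)$. *)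

theory Defs
  imports "HOL-Analysis.Analysis"
begin

text \<open>Tabular finite MDP: finite state type 's, finite action type 'a.
  P s a s' = transition probability, r s a = reward, pol s a = pi(a|s),
  distributions over states are functions 's => real.\<close>

definition is_dist :: "('b::finite \<Rightarrow> real) \<Rightarrow> bool" where
  "is_dist p \<longleftrightarrow> (\<forall>x. 0 \<le> p x) \<and> (\<Sum>x\<in>UNIV. p x) = 1"

definition is_kernel :: "('s::finite \<Rightarrow> 'a::finite \<Rightarrow> 's \<Rightarrow> real) \<Rightarrow> bool" where
  "is_kernel P \<longleftrightarrow> (\<forall>s a. is_dist (P s a))"

definition is_policy :: "('s::finite \<Rightarrow> 'a::finite \<Rightarrow> real) \<Rightarrow> bool" where
  "is_policy pol \<longleftrightarrow> (\<forall>s. is_dist (pol s))"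

definition step_dist ::
  "('s::finite \<Rightarrow> 'a::finite \<Rightarrow> 's \<Rightarrow> real) \<Rightarrow> ('s \<Rightarrow> 'a \<Rightarrow> real) \<Rightarrow> ('s \<Rightarrow> real) \<Rightarrow> ('s \<Rightarrow> real)" where
  "step_dist P pol \<mu> = (\<lambda>s'. \<Sum>s\<in>UNIV. \<Sum>a\<in>UNIV. \<mu> s * pol s a * P s a s')"

definition state_dist ::
  "('s::finite \<Rightarrow> 'a::finite \<Rightarrow> 's \<Rightarrow> real) \<Rightarrow> ('s \<Rightarrow> 'a \<Rightarrow> real) \<Rightarrow> ('s \<Rightarrow> real) \<Rightarrow> nat \<Rightarrow> ('s \<Rightarrow> real)" where
  "state_dist P pol \<mu> t = (step_dist P pol ^^ t) \<mu>"

definition Vfun ::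
  "('s::finite \<Rightarrow> 'a::finite \<Rightarrow> 's \<Rightarrow> real) \<Rightarrow> ('s \<Rightarrow> 'a \<Rightarrow> real) \<Rightarrow> real \<Rightarrow> ('s \<Rightarrow> 'a \<Rightarrow> real) \<Rightarrow> 's \<Rightarrow> real" where
  "Vfun P r \<gamma> pol s = (\<Sum>t. \<gamma> ^ t * (\<Sum>s'\<in>UNIV. state_dist P pol (\<lambda>x. if x = s then 1 else 0) t s'
                                          * (\<Sum>a\<in>UNIV. pol s' a * r s' a)))"

definition Qfun ::
  "('s::finite \<Rightarrow> 'a::finite \<Rightarrow> 's \<Rightarrow> real) \<Rightarrow> ('s \<Rightarrow> 'a \<Rightarrow> real) \<Rightarrow> real \<Rightarrow> ('s \<Rightarrow> 'a \<Rightarrow> real) \<Rightarrow> 's \<Rightarrow> 'a \<Rightarrow> real" where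
  "Qfun P r \<gamma> pol s a = r s a + \<gamma> * (\<Sum>s'\<in>UNIV. P s a s' * Vfun P r \<gamma> pol s')"

definition Vtot ::
  "('s::finite \<Rightarrow> 'a::finite \<Rightarrow> 's \<Rightarrow> real) \<Rightarrow> ('s \<Rightarrow> 'a \<Rightarrow> real) \<Rightarrow> real \<Rightarrow> ('s \<Rightarrow> real) \<Rightarrow> ('s \<Rightarrow> 'a \<Rightarrow> real) \<Rightarrow> real" where
  "Vtot P r \<gamma> \<rho> pol = (\<Sum>s\<in>UNIV. \<rho> s * Vfun P r \<gamma> pol s)"

definition occ ::
  "('s::finite \<Rightarrow> 'a::finite \<Rightarrow> 's \<Rightarrow> real) \<Rightarrow> real \<Rightarrow> ('s \<Rightarrow> real) \<Rightarrow> ('s \<Rightarrow> 'a \<Rightarrow> real) \<Rightarrow> 's \<Rightarrow> real" where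
  "occ P \<gamma> \<rho> pol s = (1 - \<gamma>) * (\<Sum>t. \<gamma> ^ t * state_dist P pol \<rho> t s)"

end

theory Submission
  imports Defs
begin

lemma dist_le1:
  fixes \<mu> :: "'b::finite \<Rightarrow> real"
  assumes "is_dist \<mu>" shows "0 \<le> \<mu> x" "\<mu> x \<le> 1"
proof -
  show "0 \<le> \<mu> x" using assms by (simp add: is_dist_def)
  have "\<mu> x \<le> (\<Sum>y\<in>UNIV. \<mu> y)"
    by (rule member_le_sum) (use assms in \<open>auto simp: is_dist_def\<close>)
  then show "\<mu> x \<le> 1" using assms by (simp add: is_dist_def)
qed

lemma dist_bound:
  fixes \<mu> :: "'b::finite \<Rightarrow> real"
  assumes "is_dist \<mu>" shows "\<bar>\<Sum>x\<in>UNIV. \<mu> x * h x\<bar> \<le> (\<Sum>x\<in>UNIV. \<bar>h x\<bar>)"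
proof -
  have "\<bar>\<Sum>x\<in>UNIV. \<mu> x * h x\<bar> \<le> (\<Sum>x\<in>UNIV. \<bar>\<mu> x * h x\<bar>)" by (rule sum_abs)
  also have "\<dots> \<le> (\<Sum>x\<in>UNIV. \<bar>h x\<bar>)"
  proof (rule sum_mono)
    fix x
    have "\<bar>\<mu> x\<bar> \<le> 1" using dist_le1[OF assms, of x] by simp
    then show "\<bar>\<mu> x * h x\<bar> \<le> \<bar>h x\<bar>"
      by (simp add: abs_mult mult_left_le_one_le)
  qed
  finally show ?thesis .
qed

lemma step_dist_dist:
  assumes "is_kernel P" "is_policy pol" "is_dist \<mu>"
  shows "is_dist (step_dist P pol \<mu>)"
proof -
  have nn: "\<And>s a s'. 0 \<le> P s a s'" "\<And>s a. 0 \<le> pol s a" "\<And>s. 0 \<le> \<mu> s"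
    using assms by (auto simp: is_kernel_def is_policy_def is_dist_def)
  have "(\<Sum>s'\<in>UNIV. step_dist P pol \<mu> s') = (\<Sum>s'\<in>UNIV. \<Sum>s\<in>UNIV. \<Sum>a\<in>UNIV. \<mu> s * pol s a * P s a s')"
    by (simp add: step_dist_def)
  also have "\<dots> = (\<Sum>s\<in>UNIV. \<Sum>s'\<in>UNIV. \<Sum>a\<in>UNIV. \<mu> s * pol s a * P s a s')"
    by (rule sum.swap)
  also have "\<dots> = (\<Sum>s\<in>UNIV. \<Sum>a\<in>UNIV. \<Sum>s'\<in>UNIV. \<mu> s * pol s a * P s a s')"
    by (rule sum.cong[OF refl], rule sum.swap)
  also have "\<dots> = (\<Sum>s\<in>UNIV. \<Sum>a\<in>UNIV. \<mu> s * pol s a * (\<Sum>s'\<in>UNIV. P s a s'))"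
    by (simp only: sum_distrib_left)
  also have "\<dots> = (\<Sum>s\<in>UNIV. \<mu> s * (\<Sum>a\<in>UNIV. pol s a))"
    using assms by (simp add: is_kernel_def is_dist_def sum_distrib_left)
  also have "\<dots> = 1" using assms by (simp add: is_policy_def is_dist_def)
  finally show ?thesis
    unfolding is_dist_def step_dist_def using nn by (auto intro!: sum_nonneg)
qed

lemma state_dist_0[simp]: "state_dist P pol \<mu> 0 = \<mu>"
  by (simp add: state_dist_def)

lemma state_dist_Suc: "state_dist P pol \<mu> (Suc t) = step_dist P pol (state_dist P pol \<mu> t)"
  by (simp add: state_dist_def)

lemma state_dist_Suc': "state_dist P pol \<mu> (Suc t) = state_dist P pol (step_dist P pol \<mu>) t"
  by (simp add: state_dist_def funpow_Suc_right del: funpow.simps)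

lemma state_dist_dist:
  assumes "is_kernel P" "is_policy pol" "is_dist \<mu>"
  shows "is_dist (state_dist P pol \<mu> t)"
  by (induction t) (use assms in \<open>auto simp: state_dist_Suc intro: step_dist_dist\<close>)

lemma delta_dist: "is_dist (\<lambda>x::'b::finite. if x = s then 1 else 0)"
  by (simp add: is_dist_def)

lemma state_dist_lin:
  "state_dist P pol \<mu> t y = (\<Sum>s\<in>UNIV. \<mu> s * state_dist P pol (\<lambda>x. if x = s then 1 else 0) t y)"
proof (induction t arbitrary: y)
  case 0
  then show ?case by (simp add: if_distrib cong: if_cong)
next
  case (Suc t)
  have "state_dist P pol \<mu> (Suc t) y = (\<Sum>x\<in>UNIV. \<Sum>a\<in>UNIV. state_dist P pol \<mu> t x * pol x a * P x a y)"
    by (simp add: state_dist_Suc step_dist_def)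
  also have "\<dots> = (\<Sum>x\<in>UNIV. \<Sum>a\<in>UNIV. \<Sum>s\<in>UNIV. \<mu> s * state_dist P pol (\<lambda>x. if x = s then 1 else 0) t x * pol x a * P x a y)"
    by (simp add: Suc sum_distrib_right)
  also have "\<dots> = (\<Sum>s\<in>UNIV. \<mu> s * (\<Sum>x\<in>UNIV. \<Sum>a\<in>UNIV. state_dist P pol (\<lambda>x. if x = s then 1 else 0) t x * pol x a * P x a y))"
  proof -
    have "(\<Sum>x\<in>UNIV. \<Sum>a\<in>UNIV. \<Sum>s\<in>UNIV. \<mu> s * state_dist P pol (\<lambda>x. if x = s then 1 else 0) t x * pol x a * P x a y)
       = (\<Sum>x\<in>UNIV. \<Sum>s\<in>UNIV. \<Sum>a\<in>UNIV. \<mu> s * state_dist P pol (\<lambda>x. if x = s then 1 else 0) t x * pol x a * P x a y)"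
      by (rule sum.cong[OF refl], rule sum.swap)
    also have "\<dots> = (\<Sum>s\<in>UNIV. \<Sum>x\<in>UNIV. \<Sum>a\<in>UNIV. \<mu> s * state_dist P pol (\<lambda>x. if x = s then 1 else 0) t x * pol x a * P x a y)"
      by (rule sum.swap)
    also have "\<dots> = (\<Sum>s\<in>UNIV. \<mu> s * (\<Sum>x\<in>UNIV. \<Sum>a\<in>UNIV. state_dist P pol (\<lambda>x. if x = s then 1 else 0) t x * pol x a * P x a y))"
      by (simp only: sum_distrib_left mult.assoc)
    finally show ?thesis .
  qed
  also have "\<dots> = (\<Sum>s\<in>UNIV. \<mu> s * state_dist P pol (\<lambda>x. if x = s then 1 else 0) (Suc t) y)"
    by (simp add: state_dist_Suc step_dist_def)
  finally show ?case .
qed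

lemma step_delta:
  "step_dist P pol (\<lambda>x. if x = s then 1 else 0) y = (\<Sum>a\<in>UNIV. pol s a * P s a y)"
proof -
  have "\<And>sa. (\<Sum>a\<in>UNIV. (if sa = s then 1 else 0) * pol sa a * P sa a y)
     = (if sa = s then (\<Sum>a\<in>UNIV. pol s a * P s a y) else 0)" by auto
  then show ?thesis by (simp add: step_dist_def)
qed

lemma series_summable:
  fixes \<gamma> :: real
  assumes "0 \<le> \<gamma>" "\<gamma> < 1" "\<And>t. is_dist (\<mu> t :: 'b::finite \<Rightarrow> real)"
  shows "summable (\<lambda>t. \<gamma> ^ t * (\<Sum>x\<in>UNIV. \<mu> t x * h x))"
proof (rule summable_comparison_test)
  show "\<exists>N. \<forall>n\<ge>N. norm (\<gamma> ^ n * (\<Sum>x\<in>UNIV. \<mu> n x * h x)) \<le> \<gamma> ^ n * (\<Sum>x\<in>UNIV. \<bar>h x\<bar>)"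
    using dist_bound[OF assms(3)] assms(1)
    by (auto simp: abs_mult intro!: mult_left_mono)
  show "summable (\<lambda>n. \<gamma> ^ n * (\<Sum>x\<in>UNIV. \<bar>h x\<bar>))"
    using assms by (intro summable_mult2 summable_geometric) auto
qed

lemma Vtot_sums:
  fixes \<gamma> :: real
  assumes "is_kernel P" "is_policy pol" "0 \<le> \<gamma>" "\<gamma> < 1"
  shows "(\<lambda>t. \<gamma> ^ t * (\<Sum>y\<in>UNIV. state_dist P pol \<mu> t y * (\<Sum>a\<in>UNIV. pol y a * r y a)))
           sums Vtot P r \<gamma> \<mu> pol"
proof -
  let ?R = "\<lambda>y. \<Sum>a\<in>UNIV. pol y a * r y a"
  let ?D = "\<lambda>s. (\<lambda>x. if x = s then 1 else 0)"
  have "(\<lambda>t. \<gamma> ^ t * (\<Sum>y\<in>UNIV. state_dist P pol (?D s) t y * ?R y)) sums Vfun P r \<gamma> pol s" for s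
    unfolding Vfun_def
    by (rule summable_sums, rule series_summable)
       (use assms in \<open>auto intro: state_dist_dist delta_dist\<close>)
  then have "(\<lambda>t. \<Sum>s\<in>UNIV. \<mu> s * (\<gamma> ^ t * (\<Sum>y\<in>UNIV. state_dist P pol (?D s) t y * ?R y)))
      sums (\<Sum>s\<in>UNIV. \<mu> s * Vfun P r \<gamma> pol s)"
    by (intro sums_sum sums_mult)
  moreover have "(\<Sum>s\<in>UNIV. \<mu> s * (\<gamma> ^ t * (\<Sum>y\<in>UNIV. state_dist P pol (?D s) t y * ?R y)))
     = \<gamma> ^ t * (\<Sum>y\<in>UNIV. state_dist P pol \<mu> t y * ?R y)" for t
  proof -
    have "\<gamma> ^ t * (\<Sum>y\<in>UNIV. state_dist P pol \<mu> t y * ?R y)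
      = \<gamma> ^ t * (\<Sum>y\<in>UNIV. \<Sum>s\<in>UNIV. \<mu> s * state_dist P pol (?D s) t y * ?R y)"
      by (subst state_dist_lin) (simp only: sum_distrib_right)
    also have "\<dots> = \<gamma> ^ t * (\<Sum>s\<in>UNIV. \<Sum>y\<in>UNIV. \<mu> s * state_dist P pol (?D s) t y * ?R y)"
      by (subst sum.swap) (rule refl)
    also have "\<dots> = (\<Sum>s\<in>UNIV. \<mu> s * (\<gamma> ^ t * (\<Sum>y\<in>UNIV. state_dist P pol (?D s) t y * ?R y)))"
      by (simp add: sum_distrib_left mult_ac)
    finally show ?thesis by simp
  qed
  ultimately show ?thesis by (simp add: Vtot_def)
qed


theorem lemma7:
  fixes P :: "'s::finite \<Rightarrow> 'a::finite \<Rightarrow> 's \<Rightarrow> real"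
    and r :: "'s \<Rightarrow> 'a \<Rightarrow> real"
    and \<gamma> \<eta> :: real
    and \<rho> :: "'s \<Rightarrow> real"
    and \<pi> \<pi>' :: "'s \<Rightarrow> 'a \<Rightarrow> real"
    and U f :: "'a \<Rightarrow> 's \<Rightarrow> real"
    and Z :: "'s \<Rightarrow> real"
  assumes "is_kernel P"
    and "is_dist \<rho>"
    and "0 \<le> \<gamma>" and "\<gamma> < 1"
    and "is_policy \<pi>"
    and "\<And>s a. 0 < \<pi> s a"
    and "0 < \<eta>"
    and U_def: "\<And>a s. U a s = Qfun P r \<gamma> \<pi> s a - Vfun P r \<gamma> \<pi> s"
    and f_def: "\<And>a s. f a s = max (U a s) 0"
    and Z_def: "\<And>s. Z s = (\<Sum>a'\<in>UNIV. \<pi> s a' * exp (\<eta> * f a' s))"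
    and pi'_def: "\<And>s a. \<pi>' s a = \<pi> s a * exp (\<eta> * f a s) / Z s"
  shows "Vtot P r \<gamma> \<rho> \<pi>' - Vtot P r \<gamma> \<rho> \<pi>
           = 1 / (1 - \<gamma>) * (\<Sum>s\<in>UNIV. occ P \<gamma> \<rho> \<pi>' s * (1 / Z s) *
               (\<Sum>i\<in>{i. U i s > 0}. \<pi> s i * U i s * (exp (\<eta> * U i s) - 1)))
       \<and> 1 / (1 - \<gamma>) * (\<Sum>s\<in>UNIV. occ P \<gamma> \<rho> \<pi>' s * (1 / Z s) *
               (\<Sum>i\<in>{i. U i s > 0}. \<pi> s i * U i s * (exp (\<eta> * U i s) - 1))) \<ge> 0"
proof -
  note K = assms(1) and rho = assms(2) and g0 = assms(3) and g1 = assms(4)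
    and pol = assms(5) and pos = assms(6) and eta = assms(7)
  define D where "D s = (\<lambda>x::'s. if x = s then 1 else (0::real))" for s
  define V where "V = Vfun P r \<gamma> \<pi>"
  have VtotD: "Vtot P r \<gamma> (D s) pol = Vfun P r \<gamma> pol s" for s pol
  proof -
    have "\<And>x. D s x * Vfun P r \<gamma> pol x = (if x = s then Vfun P r \<gamma> pol s else 0)"
      by (simp add: D_def)
    then show ?thesis by (simp add: Vtot_def)
  qed
  have bell: "V s = (\<Sum>a\<in>UNIV. \<pi> s a * r s a) + \<gamma> * (\<Sum>x\<in>UNIV. (\<Sum>a\<in>UNIV. \<pi> s a * P s a x) * V x)" for s
  proof -
    let ?R = "\<lambda>y. \<Sum>a\<in>UNIV. \<pi> y a * r y a"
    let ?f = "\<lambda>t. \<gamma>^t * (\<Sum>y\<in>UNIV. state_dist P \<pi> (D s) t y * ?R y)"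
    have f: "?f sums V s"
      using Vtot_sums[OF K pol g0 g1, of "D s" r] by (simp add: VtotD V_def)
    have A: "(\<lambda>t. ?f (Suc t)) sums (V s - ?f 0)"
      by (subst sums_Suc_iff) (simp add: f)
    have "(\<lambda>t. \<gamma> * (\<gamma>^t * (\<Sum>y\<in>UNIV. state_dist P \<pi> (step_dist P \<pi> (D s)) t y * ?R y)))
       sums (\<gamma> * Vtot P r \<gamma> (step_dist P \<pi> (D s)) \<pi>)"
      by (intro sums_mult Vtot_sums[OF K pol g0 g1])
    then have B: "(\<lambda>t. ?f (Suc t)) sums (\<gamma> * Vtot P r \<gamma> (step_dist P \<pi> (D s)) \<pi>)"
      by (simp add: state_dist_Suc' mult_ac)
    have "V s - ?f 0 = \<gamma> * Vtot P r \<gamma> (step_dist P \<pi> (D s)) \<pi>"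
      using sums_unique2[OF A B] .
    moreover have "?f 0 = ?R s"
    proof -
      have "\<And>y. D s y * ?R y = (if y = s then ?R s else 0)" by (simp add: D_def)
      then show ?thesis by simp
    qed
    moreover have "Vtot P r \<gamma> (step_dist P \<pi> (D s)) \<pi> = (\<Sum>x\<in>UNIV. (\<Sum>a\<in>UNIV. \<pi> s a * P s a x) * V x)"
      by (simp add: Vtot_def D_def step_delta V_def)
    ultimately show ?thesis by simp
  qed
  have Ueq: "U a s = r s a + \<gamma> * (\<Sum>x\<in>UNIV. P s a x * V x) - V s" for a s
    by (simp add: U_def Qfun_def V_def)
  have sum_pol: "(\<Sum>a\<in>UNIV. \<pi> s a) = 1" for s
    using pol by (simp add: is_policy_def is_dist_def)
  have swap1: "(\<Sum>x\<in>UNIV. (\<Sum>a\<in>UNIV. q a * P s a x) * V x) = (\<Sum>a\<in>UNIV. q a * (\<Sum>x\<in>UNIV. P s a x * V x))"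
    for q :: "'a \<Rightarrow> real" and s
  proof -
    have "(\<Sum>x\<in>UNIV. (\<Sum>a\<in>UNIV. q a * P s a x) * V x) = (\<Sum>x\<in>UNIV. \<Sum>a\<in>UNIV. q a * (P s a x * V x))"
      by (simp only: sum_distrib_right mult.assoc)
    also have "\<dots> = (\<Sum>a\<in>UNIV. \<Sum>x\<in>UNIV. q a * (P s a x * V x))"
      by (rule sum.swap)
    also have "\<dots> = (\<Sum>a\<in>UNIV. q a * (\<Sum>x\<in>UNIV. P s a x * V x))"
      by (simp only: sum_distrib_left)
    finally show ?thesis .
  qed
  have adv0: "(\<Sum>a\<in>UNIV. \<pi> s a * U a s) = 0" for s
  proof -
    have t: "\<pi> s a * U a s = \<pi> s a * r s a + \<gamma> * (\<pi> s a * (\<Sum>x\<in>UNIV. P s a x * V x)) - \<pi> s a * V s" for a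
      unfolding Ueq by (simp only: algebra_simps)
    have "(\<Sum>a\<in>UNIV. \<pi> s a * U a s) = (\<Sum>a\<in>UNIV. \<pi> s a * r s a) + \<gamma> * (\<Sum>a\<in>UNIV. \<pi> s a * (\<Sum>x\<in>UNIV. P s a x * V x)) - (\<Sum>a\<in>UNIV. \<pi> s a) * V s"
      unfolding t by (simp only: sum.distrib sum_subtractf sum_distrib_left[symmetric] sum_distrib_right[symmetric])
    also have "\<dots> = 0" using bell[of s] swap1[of "\<pi> s" s] sum_pol[of s] by simp
    finally show ?thesis .
  qed
  have Zpos: "0 < Z s" for s
    unfolding Z_def by (rule sum_pos) (use pos in auto)
  have sum_pol': "(\<Sum>a\<in>UNIV. \<pi>' s a) = 1" for s
    using Zpos[of s] by (simp add: pi'_def Z_def[symmetric] flip: sum_divide_distrib)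
  have pol': "is_policy \<pi>'"
    unfolding is_policy_def is_dist_def using sum_pol' Zpos pos
    by (auto simp: pi'_def intro!: divide_nonneg_pos less_imp_le)
  define S where "S s = (\<Sum>i\<in>{i. U i s > 0}. \<pi> s i * U i s * (exp (\<eta> * U i s) - 1))" for s
  define g where "g s = (\<Sum>a\<in>UNIV. \<pi>' s a * U a s)" for s
  have gform: "g s = (1 / Z s) * S s" for s
  proof -
    have "g s = (1 / Z s) * (\<Sum>a\<in>UNIV. \<pi> s a * exp (\<eta> * f a s) * U a s)"
      by (simp add: g_def pi'_def sum_distrib_left)
    also have "(\<Sum>a\<in>UNIV. \<pi> s a * exp (\<eta> * f a s) * U a s)
        = (\<Sum>a\<in>UNIV. \<pi> s a * exp (\<eta> * f a s) * U a s) - (\<Sum>a\<in>UNIV. \<pi> s a * U a s)"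
      by (simp add: adv0)
    also have "\<dots> = (\<Sum>a\<in>UNIV. if U a s > 0 then \<pi> s a * U a s * (exp (\<eta> * U a s) - 1) else 0)"
      by (subst sum_subtractf[symmetric], rule sum.cong) (auto simp: f_def algebra_simps)
    also have "\<dots> = S s"
      by (simp add: S_def sum.inter_filter[symmetric])
    finally show ?thesis .
  qed
  have Snn: "0 \<le> S s" for s
    unfolding S_def using pos eta
    by (intro sum_nonneg) (auto intro!: mult_nonneg_nonneg less_imp_le)
  define \<mu> where "\<mu> t = state_dist P \<pi>' \<rho> t" for t
  have \<mu>d: "is_dist (\<mu> t)" for t
    unfolding \<mu>_def by (rule state_dist_dist[OF K pol' rho])
  define b where "b t = \<gamma>^t * (\<Sum>y\<in>UNIV. \<mu> t y * V y)" for t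
  let ?R' = "\<lambda>y. \<Sum>a\<in>UNIV. \<pi>' y a * r y a"
  have Rstep: "?R' y = g y + V y - \<gamma> * (\<Sum>x\<in>UNIV. (\<Sum>a\<in>UNIV. \<pi>' y a * P y a x) * V x)" for y
  proof -
    have t: "\<pi>' y a * U a y = \<pi>' y a * r y a + \<gamma> * (\<pi>' y a * (\<Sum>x\<in>UNIV. P y a x * V x)) - \<pi>' y a * V y" for a
      unfolding Ueq by (simp only: algebra_simps)
    have "g y = ?R' y + \<gamma> * (\<Sum>a\<in>UNIV. \<pi>' y a * (\<Sum>x\<in>UNIV. P y a x * V x)) - (\<Sum>a\<in>UNIV. \<pi>' y a) * V y"
      unfolding g_def t by (simp only: sum.distrib sum_subtractf sum_distrib_left[symmetric] sum_distrib_right[symmetric])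
    then show ?thesis using swap1[of "\<pi>' y" y] sum_pol'[of y] by simp
  qed
  have mustep: "(\<Sum>x\<in>UNIV. \<mu> (Suc t) x * V x) = (\<Sum>y\<in>UNIV. \<mu> t y * (\<Sum>x\<in>UNIV. (\<Sum>a\<in>UNIV. \<pi>' y a * P y a x) * V x))" for t
  proof -
    have "(\<Sum>x\<in>UNIV. \<mu> (Suc t) x * V x) = (\<Sum>x\<in>UNIV. \<Sum>y\<in>UNIV. \<mu> t y * (\<Sum>a\<in>UNIV. \<pi>' y a * P y a x) * V x)"
      by (simp add: \<mu>_def state_dist_Suc step_dist_def sum_distrib_left sum_distrib_right mult.assoc)
    also have "\<dots> = (\<Sum>y\<in>UNIV. \<Sum>x\<in>UNIV. \<mu> t y * ((\<Sum>a\<in>UNIV. \<pi>' y a * P y a x) * V x))"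
      by (subst sum.swap) (simp only: mult.assoc)
    also have "\<dots> = (\<Sum>y\<in>UNIV. \<mu> t y * (\<Sum>x\<in>UNIV. (\<Sum>a\<in>UNIV. \<pi>' y a * P y a x) * V x))"
      by (simp only: sum_distrib_left)
    finally show ?thesis .
  qed
  have key: "\<gamma>^t * (\<Sum>y\<in>UNIV. \<mu> t y * ?R' y) = \<gamma>^t * (\<Sum>y\<in>UNIV. \<mu> t y * g y) + (b t - b (Suc t))" for t
  proof -
    have "(\<Sum>y\<in>UNIV. \<mu> t y * ?R' y) = (\<Sum>y\<in>UNIV. \<mu> t y * g y) + (\<Sum>y\<in>UNIV. \<mu> t y * V y)
       - \<gamma> * (\<Sum>y\<in>UNIV. \<mu> t y * (\<Sum>x\<in>UNIV. (\<Sum>a\<in>UNIV. \<pi>' y a * P y a x) * V x))"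
    proof -
      have t: "\<mu> t y * ?R' y = \<mu> t y * g y + \<mu> t y * V y - \<gamma> * (\<mu> t y * (\<Sum>x\<in>UNIV. (\<Sum>a\<in>UNIV. \<pi>' y a * P y a x) * V x))" for y
        by (subst Rstep) (simp only: algebra_simps)
      show ?thesis unfolding t by (simp only: sum.distrib sum_subtractf sum_distrib_left[symmetric])
    qed
    then have e: "(\<Sum>y\<in>UNIV. \<mu> t y * ?R' y) = (\<Sum>y\<in>UNIV. \<mu> t y * g y) + (\<Sum>y\<in>UNIV. \<mu> t y * V y)
       - \<gamma> * (\<Sum>x\<in>UNIV. \<mu> (Suc t) x * V x)" by (simp only: mustep)
    show ?thesis unfolding b_def e by (simp add: algebra_simps)
  qed
  have gsum: "summable (\<lambda>t. \<gamma>^t * (\<Sum>y\<in>UNIV. \<mu> t y * g y))"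
    by (rule series_summable[OF g0 g1 \<mu>d])
  have b0: "b \<longlonglongrightarrow> 0"
  proof (rule Lim_null_comparison)
    show "\<forall>\<^sub>F t in sequentially. norm (b t) \<le> \<gamma>^t * (\<Sum>x\<in>UNIV. \<bar>V x\<bar>)"
      using dist_bound[OF \<mu>d] g0 by (intro always_eventually allI) (auto simp: b_def abs_mult intro!: mult_left_mono)
    show "(\<lambda>t. \<gamma>^t * (\<Sum>x\<in>UNIV. \<bar>V x\<bar>)) \<longlonglongrightarrow> 0"
      using g0 g1 by (intro tendsto_mult_left_zero LIMSEQ_power_zero) auto
  qed
  have tel: "(\<lambda>t. b t - b (Suc t)) sums (b 0)"
    using telescope_sums'[OF b0] by simp
  have L1: "(\<lambda>t. \<gamma>^t * (\<Sum>y\<in>UNIV. \<mu> t y * ?R' y)) sums (suminf (\<lambda>t. \<gamma>^t * (\<Sum>y\<in>UNIV. \<mu> t y * g y)) + b 0)"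
    unfolding key by (intro sums_add summable_sums gsum tel)
  have L2: "(\<lambda>t. \<gamma>^t * (\<Sum>y\<in>UNIV. \<mu> t y * ?R' y)) sums Vtot P r \<gamma> \<rho> \<pi>'"
    unfolding \<mu>_def by (rule Vtot_sums[OF K pol' g0 g1])
  have b00: "b 0 = Vtot P r \<gamma> \<rho> \<pi>"
    by (simp add: b_def \<mu>_def Vtot_def V_def)
  have diff: "Vtot P r \<gamma> \<rho> \<pi>' - Vtot P r \<gamma> \<rho> \<pi> = suminf (\<lambda>t. \<gamma>^t * (\<Sum>y\<in>UNIV. \<mu> t y * g y))"
    using sums_unique2[OF L1 L2] b00 by simp
  have musum: "summable (\<lambda>t. \<gamma>^t * \<mu> t y)" for y
  proof (rule summable_comparison_test)
    show "\<exists>N. \<forall>n\<ge>N. norm (\<gamma>^n * \<mu> n y) \<le> \<gamma>^n"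
      using dist_le1[OF \<mu>d] g0 by (auto simp: abs_mult intro!: mult_left_le)
    show "summable (\<lambda>n. \<gamma>^n)" using g0 g1 by (intro summable_geometric) auto
  qed
  have occ_eq: "occ P \<gamma> \<rho> \<pi>' y = (1 - \<gamma>) * suminf (\<lambda>t. \<gamma>^t * \<mu> t y)" for y
    by (simp add: occ_def \<mu>_def)
  have occ_nn: "0 \<le> occ P \<gamma> \<rho> \<pi>' y" for y
    unfolding occ_eq using g1 g0 dist_le1(1)[OF \<mu>d]
    by (intro mult_nonneg_nonneg suminf_nonneg musum) auto
  have "(\<lambda>t. \<Sum>y\<in>UNIV. g y * (\<gamma>^t * \<mu> t y)) sums (\<Sum>y\<in>UNIV. g y * suminf (\<lambda>t. \<gamma>^t * \<mu> t y))"
    by (intro sums_sum sums_mult summable_sums musum)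
  then have gs: "(\<lambda>t. \<gamma>^t * (\<Sum>y\<in>UNIV. \<mu> t y * g y)) sums (\<Sum>y\<in>UNIV. g y * suminf (\<lambda>t. \<gamma>^t * \<mu> t y))"
    by (simp add: sum_distrib_left mult_ac)
  have diff2: "Vtot P r \<gamma> \<rho> \<pi>' - Vtot P r \<gamma> \<rho> \<pi> = (\<Sum>y\<in>UNIV. g y * suminf (\<lambda>t. \<gamma>^t * \<mu> t y))"
    using diff sums_unique[OF gs] by simp
  have rhs: "1 / (1 - \<gamma>) * (\<Sum>s\<in>UNIV. occ P \<gamma> \<rho> \<pi>' s * (1 / Z s) * S s)
      = (\<Sum>y\<in>UNIV. g y * suminf (\<lambda>t. \<gamma>^t * \<mu> t y))"
    using g1 by (simp add: occ_eq gform sum_distrib_left mult_ac)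
  have nn: "0 \<le> 1 / (1 - \<gamma>) * (\<Sum>s\<in>UNIV. occ P \<gamma> \<rho> \<pi>' s * (1 / Z s) * S s)"
    using g1 occ_nn Zpos Snn by (intro mult_nonneg_nonneg sum_nonneg) (auto intro: less_imp_le)
  show ?thesis using diff2 rhs nn unfolding S_def by simp
qed

end
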